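(* Let $X$ be a convex metric space over a Boolean ring $B$, $0\in X$, and suppose every element of $X$ is a convex combination of elements of $\{0,x_{1},\dots,x_{n}\}\subseteq X$, where $\{x_{1},\dots,x_{s}\}$ ($s\le n$) is an orthogonal set. Then there exist $a_{s+1},\dots,a_{n}\in B$ such that $\{x_{1},\dots,x_{s},a_{s+1}x_{s+1},\dots,a_{n}x_{n}\}\setminus\{0\}$ is a referential of $(X,0)$. In particular, every orthogonal subset of a pointed CFG-space $(X,0)$ can be extended to a referential of $(X,0)$.
   Context: $B$ is a Boolean ring ($a\vee b=a+b+ab$, $a\le b\iff ab=a$, $\bar a=1+a$; $a_1\oplus\cdots\oplus a_n$ denotes a sum of pairwise disjoint elements). A Boolean metric space over $B$: set $X$ with $d:X\times X\to B$, $d(x,y)=0\iff x=y$, symmetric, $d(x,z)\le d(x,y)\vee d(y,z)$. For $y_1,\dots,y_m\in X$, $b_i\in B$ with $b_1\oplus\cdots\oplus b_m=1$, $y$ is a convex combination of the $y_i$ with coefficients $b_i$ if $b_id(y,y_i)=0$ for all $i$; $X$ is convex if all such combinations exist; a CFG-space is a convex space all of whose elements are convex combinations of elements of some fixed finite subset. In $(X,0)$: $|x|=d(0,x)$; for $a\in B$, $ax$ denotes the convex combination of $x,0$ with coefficients $a,\bar a$. $x\perp y$ iff $d(x,y)=|x|\vee|y|$; a finite $R\subseteq X$ is orthogonal if $0\notin R$ and distinct elements are orthogonal; a referential of $(X,0)$ is an orthogonal $R$ such that every element of $X$ is a convex combination of elements of $R\cup\{0\}$. *)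

theory Defs
  imports Main
begin

definition boolean_ring :: "'b::comm_ring_1 itself \<Rightarrow> bool" where
  "boolean_ring _ \<longleftrightarrow> (\<forall>a::'b. a * a = a)"

definition bjoin :: "'b::comm_ring_1 \<Rightarrow> 'b \<Rightarrow> 'b" where
  "bjoin a b = a + b + a * b"

definition ble :: "'b::comm_ring_1 \<Rightarrow> 'b \<Rightarrow> bool" where
  "ble a b \<longleftrightarrow> a * b = a"

definition bmetric :: "'x set \<Rightarrow> ('x \<Rightarrow> 'x \<Rightarrow> 'b::comm_ring_1) \<Rightarrow> bool" where
  "bmetric X d \<longleftrightarrow>
     (\<forall>x\<in>X. \<forall>y\<in>X. d x y = 0 \<longleftrightarrow> x = y) \<and>
     (\<forall>x\<in>X. \<forall>y\<in>X. d x y = d y x) \<and>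
     (\<forall>x\<in>X. \<forall>y\<in>X. \<forall>z\<in>X. ble (d x z) (bjoin (d x y) (d y z)))"

definition partition_unity :: "nat \<Rightarrow> (nat \<Rightarrow> 'b::comm_ring_1) \<Rightarrow> bool" where
  "partition_unity m b \<longleftrightarrow>
     (\<forall>i<m. \<forall>j<m. i \<noteq> j \<longrightarrow> b i * b j = 0) \<and> (\<Sum>i<m. b i) = 1"

definition is_cc :: "('x \<Rightarrow> 'x \<Rightarrow> 'b::comm_ring_1) \<Rightarrow> 'x \<Rightarrow> nat \<Rightarrow> (nat \<Rightarrow> 'x) \<Rightarrow> (nat \<Rightarrow> 'b) \<Rightarrow> bool" where
  "is_cc d y m ys b \<longleftrightarrow> partition_unity m b \<and> (\<forall>i<m. b i * d y (ys i) = 0)"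

definition bconvex :: "'x set \<Rightarrow> ('x \<Rightarrow> 'x \<Rightarrow> 'b::comm_ring_1) \<Rightarrow> bool" where
  "bconvex X d \<longleftrightarrow>
     (\<forall>m ys b. (\<forall>i<m. ys i \<in> X) \<and> partition_unity m b \<longrightarrow> (\<exists>y\<in>X. is_cc d y m ys b))"

definition cc_of :: "('x \<Rightarrow> 'x \<Rightarrow> 'b::comm_ring_1) \<Rightarrow> 'x set \<Rightarrow> 'x \<Rightarrow> bool" where
  "cc_of d S y \<longleftrightarrow> (\<exists>m ys b. (\<forall>i<m. ys i \<in> S) \<and> is_cc d y m ys b)"

definition cfg_space :: "'x set \<Rightarrow> ('x \<Rightarrow> 'x \<Rightarrow> 'b::comm_ring_1) \<Rightarrow> bool" where
  "cfg_space X d \<longleftrightarrow> bconvex X d \<and>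
     (\<exists>F. finite F \<and> F \<subseteq> X \<and> (\<forall>y\<in>X. cc_of d F y))"

text \<open>Pointed space (X, z): |x| = d(z,x); a x = convex combination of x, z with coefficients a, 1+a
 (unique in a metric space).\<close>
definition bnorm :: "('x \<Rightarrow> 'x \<Rightarrow> 'b::comm_ring_1) \<Rightarrow> 'x \<Rightarrow> 'x \<Rightarrow> 'b" where
  "bnorm d z x = d z x"

definition bsmul :: "'x set \<Rightarrow> ('x \<Rightarrow> 'x \<Rightarrow> 'b::comm_ring_1) \<Rightarrow> 'x \<Rightarrow> 'b \<Rightarrow> 'x \<Rightarrow> 'x" where
  "bsmul X d z a x = (THE y. y \<in> X \<and> a * d y x = 0 \<and> (1 + a) * d y z = 0)"

definition borth :: "('x \<Rightarrow> 'x \<Rightarrow> 'b::comm_ring_1) \<Rightarrow> 'x \<Rightarrow> 'x \<Rightarrow> 'x \<Rightarrow> bool" where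
  "borth d z x y \<longleftrightarrow> d x y = bjoin (bnorm d z x) (bnorm d z y)"

definition orthogonal_set :: "'x set \<Rightarrow> ('x \<Rightarrow> 'x \<Rightarrow> 'b::comm_ring_1) \<Rightarrow> 'x \<Rightarrow> 'x set \<Rightarrow> bool" where
  "orthogonal_set X d z R \<longleftrightarrow> finite R \<and> R \<subseteq> X \<and> z \<notin> R \<and>
     (\<forall>x\<in>R. \<forall>y\<in>R. x \<noteq> y \<longrightarrow> borth d z x y)"

definition referential :: "'x set \<Rightarrow> ('x \<Rightarrow> 'x \<Rightarrow> 'b::comm_ring_1) \<Rightarrow> 'x \<Rightarrow> 'x set \<Rightarrow> bool" where
  "referential X d z R \<longleftrightarrow> orthogonal_set X d z R \<and> (\<forall>y\<in>X. cc_of d (R \<union> {z}) y)"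

end

theory Submission imports Defs begin

lemma sum_split_nat: "(\<Sum>i<m1+m2::nat. f i) = (\<Sum>i<m1. f i) + (\<Sum>j<m2. f (m1+j))"
  by (induction m2) (simp_all add: add.assoc)

definition ccr :: "('x \<Rightarrow> 'x \<Rightarrow> 'b::comm_ring_1) \<Rightarrow> 'x set \<Rightarrow> 'x \<Rightarrow> 'b \<Rightarrow> bool" where
  "ccr d S y c \<longleftrightarrow> (\<exists>(m::nat) ys b. (\<forall>i<m. ys i \<in> S) \<and> (\<forall>i<m. \<forall>j<m. i \<noteq> j \<longrightarrow> b i * b j = 0)
      \<and> (\<Sum>i<m. b i) = c \<and> (\<forall>i<m. b i * d y (ys i) = 0))"

locale BMS =
  fixes X :: "'x set" and d :: "'x \<Rightarrow> 'x \<Rightarrow> 'b::comm_ring_1" and z :: 'x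
  assumes idem: "\<And>a::'b. a*a = a" and met: "bmetric X d" and cvx: "bconvex X d" and zX: "z \<in> X"
begin

lemma two: "(a::'b) + a = 0"
proof -
  have "(a+a)*(a+a) = a*a+a*a+(a*a+a*a)" by (simp add: distrib_left distrib_right add.assoc)
  hence "(a+a)+(a+a) = (a+a)+0" by (simp only: idem add_0_right)
  thus ?thesis by (rule add_left_imp_eq)
qed
lemma idem_left: "(a::'b)*(a*b) = a*b" by (simp add: mult.assoc[symmetric] idem)
lemma two_left: "(a::'b)+(a+b) = b" by (simp add: add.assoc[symmetric] two)
lemma neg: "-(a::'b) = a" using two by (rule minus_unique)
lemma diff: "(a::'b) - b = a + b" by (simp add: neg)
lemmas bs = algebra_simps idem idem_left two two_left neg diff

lemma zr: "(c::'b) * t = 0 \<Longrightarrow> (c*x) * t = 0" by (metis mult.assoc mult.commute mult_zero_right)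
lemma zl: "(c::'b) * t = 0 \<Longrightarrow> (x*c) * t = 0" by (metis mult.assoc mult_zero_right)

lemma sum0: "(x::'b) + y = 0 \<Longrightarrow> x = y"
  by (metis add_left_imp_eq two)

lemma eq_split: "c*(x::'b) = c*y \<Longrightarrow> (1+c)*x = (1+c)*y \<Longrightarrow> x = y"
proof -
  assume h: "c*x = c*y" "(1+c)*x = (1+c)*y"
  have "x = c*x + (1+c)*x" by (simp add: bs)
  also have "\<dots> = c*y + (1+c)*y" using h by simp
  also have "\<dots> = y" by (simp add: bs)
  finally show ?thesis .
qed

lemma deq: "x \<in> X \<Longrightarrow> y \<in> X \<Longrightarrow> d x y = 0 \<longleftrightarrow> x = y"
  using met unfolding bmetric_def by blast
lemma dsym: "x \<in> X \<Longrightarrow> y \<in> X \<Longrightarrow> d x y = d y x"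
  using met unfolding bmetric_def by blast
lemma dself: "x \<in> X \<Longrightarrow> d x x = 0" using deq by blast
lemma tri: "x \<in> X \<Longrightarrow> y \<in> X \<Longrightarrow> w \<in> X \<Longrightarrow> d x w * (d x y + d y w + d x y * d y w) = d x w"
  using met unfolding bmetric_def ble_def bjoin_def by blast

lemma tri0:
  assumes "x \<in> X" "y \<in> X" "w \<in> X" "c * d x y = 0" "c * d y w = 0"
  shows "c * d x w = 0"
proof -
  have "c * d x w = c * (d x w * (d x y + d y w + d x y * d y w))" using tri assms by simp
  also have "\<dots> = d x w * (c * d x y) + d x w * (c * d y w) + d x w * (c * d x y) * d y w"
    by (simp add: algebra_simps)
  also have "\<dots> = 0" using assms by simp
  finally show ?thesis .
qed

lemma L1:
  assumes "x \<in> X" "p \<in> X" "q \<in> X" "c * d p q = 0"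
  shows "c * d x p = c * d x q"
proof -
  have qp: "c * d q p = 0" using assms dsym by simp
  have "c * d x p = c * (d x p * (d x q + d q p + d x q * d q p))" using tri assms by simp
  also have "\<dots> = c * d x p * d x q + d x p * (c * d q p) + d x p * d x q * (c * d q p)"
    by (simp add: algebra_simps)
  also have "\<dots> = c * d x p * d x q" using qp by simp
  finally have 1: "c * d x p = c * d x p * d x q" .
  have "c * d x q = c * (d x q * (d x p + d p q + d x p * d p q))" using tri assms by simp
  also have "\<dots> = c * d x q * d x p + d x q * (c * d p q) + d x q * d x p * (c * d p q)"
    by (simp add: algebra_simps)
  also have "\<dots> = c * d x q * d x p" using assms by simp
  finally have 2: "c * d x q = c * d x q * d x p" .
  show ?thesis using 1 2 by (simp add: algebra_simps)
qed

definition rel :: "'b \<Rightarrow> 'x \<Rightarrow> 'x \<Rightarrow> bool" where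
  "rel a U u \<longleftrightarrow> U \<in> X \<and> u \<in> X \<and> a * d U u = 0 \<and> (1+a) * d U z = 0"

lemma smul_ex: assumes "u \<in> X" shows "\<exists>y\<in>X. a * d y u = 0 \<and> (1+a) * d y z = 0"
proof -
  define ys where "ys = (\<lambda>i::nat. if i = 0 then u else z)"
  define b where "b = (\<lambda>i::nat. if i = 0 then a else 1+a)"
  have ysX: "\<forall>i<2. ys i \<in> X" using assms zX by (simp add: ys_def)
  have pu: "partition_unity 2 b"
    unfolding partition_unity_def
  proof (intro conjI allI impI)
    fix i j :: nat assume "i < 2" "j < 2" "i \<noteq> j"
    hence "(i = 0 \<and> j = 1) \<or> (i = 1 \<and> j = 0)" by auto
    thus "b i * b j = 0" by (auto simp: b_def bs)
  next
    show "(\<Sum>i<2. b i) = 1" by (simp add: numeral_2_eq_2 b_def bs)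
  qed
  obtain y where "y \<in> X" "is_cc d y 2 ys b" using cvx ysX pu unfolding bconvex_def by blast
  hence "y \<in> X" "b 0 * d y (ys 0) = 0" "b 1 * d y (ys 1) = 0" unfolding is_cc_def by auto
  thus ?thesis by (auto simp: b_def ys_def)
qed

lemma smul_uniq:
  assumes "y \<in> X" "y' \<in> X" "u \<in> X" "a * d y u = 0" "(1+a) * d y z = 0"
    "a * d y' u = 0" "(1+a) * d y' z = 0"
  shows "y = y'"
proof -
  have "a * d y y' = a * d y u" using L1[of y y' u a] assms dsym by simp
  hence h1: "a * d y y' = a * 0" using assms by simp
  have "(1+a) * d y y' = (1+a) * d y z" using L1[of y y' z "1+a"] assms dsym zX by simp
  hence h2: "(1+a) * d y y' = (1+a) * 0" using assms by simp
  have "d y y' = 0" using eq_split[OF h1 h2] .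
  thus ?thesis using deq assms by simp
qed

lemma rel_smul: assumes "u \<in> X" shows "rel a (bsmul X d z a u) u"
proof -
  let ?P = "\<lambda>y. y \<in> X \<and> a * d y u = 0 \<and> (1 + a) * d y z = 0"
  have "\<exists>!y. ?P y" using smul_ex[OF assms] smul_uniq assms by blast
  hence "?P (THE y. ?P y)" by (rule theI')
  thus ?thesis unfolding rel_def bsmul_def using assms by simp
qed

lemma rel_one: "u \<in> X \<Longrightarrow> rel 1 u u"
  unfolding rel_def using dself by (simp add: bs)

lemma norm_rel: assumes "rel a U u" shows "d z U = a * d z u"
proof (rule eq_split[of a])
  have "a * d z U = a * d z u" using L1[of z U u a] assms zX unfolding rel_def by simp
  thus "a * d z U = a * (a * d z u)" by (simp add: idem_left)
  have "(1+a) * d z U = (1+a) * d U z" using dsym assms zX unfolding rel_def by simp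
  also have "\<dots> = 0" using assms unfolding rel_def by simp
  finally show "(1+a) * d z U = (1+a) * (a * d z u)" by (simp add: bs)
qed

lemma borth_sym: "U \<in> X \<Longrightarrow> V \<in> X \<Longrightarrow> borth d z U V \<Longrightarrow> borth d z V U"
  unfolding borth_def bjoin_def using dsym by (simp add: algebra_simps)

lemma orth_rel:
  assumes ra: "rel a U u" and rb: "rel b V v" and h: "a*b*(1 + d u v) = 0"
  shows "borth d z U V"
proof -
  have X: "U \<in> X" "u \<in> X" "V \<in> X" "v \<in> X" using ra rb unfolding rel_def by auto
  have ra1: "a * d U u = 0" "(1+a) * d U z = 0" using ra unfolding rel_def by auto
  have rb1: "b * d V v = 0" "(1+b) * d V z = 0" using rb unfolding rel_def by auto
  define D where "D = d u v"
  define P where "P = d z u"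
  define Q where "Q = d z v"
  have h1: "a*b*d U V = a*b*D"
  proof -
    have "(a*b) * d U u = 0" using ra1 by (simp add: zr)
    hence "(a*b) * d V U = (a*b) * d V u" using L1[of V U u] X by simp
    moreover have "(a*b) * d V v = 0" using rb1 by (simp add: zl)
    hence "(a*b) * d u V = (a*b) * d u v" using L1[of u V v] X by simp
    ultimately show ?thesis using dsym X D_def by metis
  qed
  have h2: "a*(1+b)*d U V = a*(1+b)*P"
  proof -
    have "(a*(1+b)) * d U u = 0" using ra1 by (simp add: zr)
    hence "(a*(1+b)) * d V U = (a*(1+b)) * d V u" using L1[of V U u] X by simp
    moreover have "(a*(1+b)) * d V z = 0" using rb1 by (simp add: zl)
    hence "(a*(1+b)) * d u V = (a*(1+b)) * d u z" using L1[of u V z] X zX by simp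
    ultimately show ?thesis using dsym X zX P_def by metis
  qed
  have h3: "(1+a)*b*d U V = (1+a)*b*Q"
  proof -
    have "((1+a)*b) * d U z = 0" using ra1 by (simp add: zr)
    hence "((1+a)*b) * d V U = ((1+a)*b) * d V z" using L1[of V U z] X zX by simp
    moreover have "((1+a)*b) * d V v = 0" using rb1 by (simp add: zl)
    hence "((1+a)*b) * d z V = ((1+a)*b) * d z v" using L1[of z V v] X zX by simp
    ultimately show ?thesis using dsym X zX Q_def by metis
  qed
  have h4: "(1+a)*(1+b)*d U V = 0"
  proof -
    have "((1+a)*(1+b)) * d U z = 0" using ra1 by (simp add: zr)
    hence "((1+a)*(1+b)) * d V U = ((1+a)*(1+b)) * d V z" using L1[of V U z] X zX by simp
    moreover have "((1+a)*(1+b)) * d V z = 0" using rb1 by (simp add: zl)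
    ultimately show ?thesis using dsym X by metis
  qed
  have "d U V = a*b*d U V + a*(1+b)*d U V + (1+a)*b*d U V + (1+a)*(1+b)*d U V"
    by (simp add: bs)
  hence dUV: "d U V = a*b*D + a*(1+b)*P + (1+a)*b*Q" using h1 h2 h3 h4 by simp
  have nU: "d z U = a * P" using norm_rel[OF ra] P_def by simp
  have nV: "d z V = b * Q" using norm_rel[OF rb] Q_def by simp
  have T: "D * (P + Q + P*Q) = D"
    using tri[of u z v] X zX dsym[of u z] unfolding D_def P_def Q_def by simp
  have "a*b + a*b*D = 0" using h unfolding D_def by (metis distrib_left mult.right_neutral)
  hence ab: "a*b = a*b*D" by (rule sum0)
  have abJ: "a*b*(P + Q + P*Q) = a*b*D"
  proof -
    have "a*b*(P + Q + P*Q) = (a*b*D)*(P + Q + P*Q)" using ab by simp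
    also have "\<dots> = a*b*(D*(P + Q + P*Q))" by (simp add: mult.assoc)
    also have "\<dots> = a*b*D" using T by simp
    finally show ?thesis .
  qed
  have "(a*b*D + a*(1+b)*P + (1+a)*b*Q) + ((a*P) + (b*Q) + (a*P)*(b*Q)) = a*b*D + a*b*(P+Q+P*Q)"
    by (simp add: bs)
  also have "\<dots> = 0" using abJ by (simp add: two)
  finally have "a*b*D + a*(1+b)*P + (1+a)*b*Q = (a*P) + (b*Q) + (a*P)*(b*Q)" by (rule sum0)
  thus ?thesis unfolding borth_def bnorm_def bjoin_def using dUV nU nV by simp
qed

lemma cc_of_iff: "cc_of d S y \<longleftrightarrow> ccr d S y 1"
  unfolding cc_of_def ccr_def is_cc_def partition_unity_def by blast

lemma ccr_zero: "ccr d S y 0"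
  unfolding ccr_def by (rule exI[of _ 0]) simp

lemma ccr_mem: "s \<in> S \<Longrightarrow> c * d y s = 0 \<Longrightarrow> ccr d S y c"
  unfolding ccr_def by (rule exI[of _ 1], rule exI[of _ "\<lambda>_. s"], rule exI[of _ "\<lambda>_. c"]) simp

lemma ccr_cong: "ccr d S y c \<Longrightarrow> c = c' \<Longrightarrow> ccr d S y c'" by simp

lemma disj_le:
  fixes m :: nat
  assumes "\<forall>i<m. \<forall>j<m. i \<noteq> j \<longrightarrow> b i * b j = (0::'b)" "i < m"
  shows "b i * (\<Sum>j<m. b j) = b i"
proof -
  have "b i * (\<Sum>j<m. b j) = (\<Sum>j<m. b i * b j)" by (simp add: sum_distrib_left)
  also have "\<dots> = b i * b i + (\<Sum>j\<in>{..<m}-{i}. b i * b j)"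
    using assms(2) by (simp add: sum.remove)
  also have "(\<Sum>j\<in>{..<m}-{i}. b i * b j) = 0" using assms by (intro sum.neutral) auto
  finally show ?thesis by (simp add: idem)
qed

lemma ccr_restrict:
  assumes "ccr d S y c" shows "ccr d S y (c * e)"
proof -
  obtain m :: nat and ys b where h: "\<forall>i<m. ys i \<in> S" "\<forall>i<m. \<forall>j<m. i \<noteq> j \<longrightarrow> b i * b j = 0"
      "(\<Sum>i<m. b i) = c" "\<forall>i<m. b i * d y (ys i) = 0"
    using assms unfolding ccr_def by blast
  have "\<forall>i<m. \<forall>j<m. i \<noteq> j \<longrightarrow> (b i * e) * (b j * e) = 0"
  proof (intro allI impI)
    fix i j assume "i < m" "j < m" "i \<noteq> j"
    hence "b i * b j = 0" using h by blast
    moreover have "(b i * e) * (b j * e) = (b i * b j) * e" by (simp add: bs)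
    ultimately show "(b i * e) * (b j * e) = 0" by simp
  qed
  moreover have "(\<Sum>i<m. b i * e) = c * e" by (metis h(3) sum_distrib_right)
  moreover have "\<forall>i<m. (b i * e) * d y (ys i) = 0" using h(4) by (simp add: zr)
  ultimately show ?thesis unfolding ccr_def using h(1)
    by (intro exI[of _ m] exI[of _ ys] exI[of _ "\<lambda>i. b i * e"]) simp
qed

lemma ccr_add:
  assumes a1: "ccr d S y c1" and a2: "ccr d S y c2" and dj: "c1 * c2 = 0"
  shows "ccr d S y (c1 + c2)"
proof -
  obtain m1 :: nat and ys1 b1 where h1: "\<forall>i<m1. ys1 i \<in> S" "\<forall>i<m1. \<forall>j<m1. i \<noteq> j \<longrightarrow> b1 i * b1 j = 0"
      "(\<Sum>i<m1. b1 i) = c1" "\<forall>i<m1. b1 i * d y (ys1 i) = 0"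
    using a1 unfolding ccr_def by blast
  obtain m2 :: nat and ys2 b2 where h2: "\<forall>i<m2. ys2 i \<in> S" "\<forall>i<m2. \<forall>j<m2. i \<noteq> j \<longrightarrow> b2 i * b2 j = 0"
      "(\<Sum>i<m2. b2 i) = c2" "\<forall>i<m2. b2 i * d y (ys2 i) = 0"
    using a2 unfolding ccr_def by blast
  define ys where "ys i = (if i < m1 then ys1 i else ys2 (i - m1))" for i
  define b where "b i = (if i < m1 then b1 i else b2 (i - m1))" for i
  have cross: "b1 i * b2 j = 0" if "i < m1" "j < m2" for i j
  proof -
    have "b1 i * b2 j = (b1 i * c1) * (b2 j * c2)"
      using disj_le[OF h1(2) that(1)] disj_le[OF h2(2) that(2)] h1(3) h2(3) by simp
    also have "\<dots> = (b1 i * b2 j) * (c1 * c2)" by (simp add: algebra_simps)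
    finally show ?thesis using dj by simp
  qed
  have "\<forall>i<m1+m2. ys i \<in> S" using h1(1) h2(1) by (auto simp: ys_def)
  moreover have "\<forall>i<m1+m2. \<forall>j<m1+m2. i \<noteq> j \<longrightarrow> b i * b j = 0"
  proof (intro allI impI)
    fix i j assume ij: "i < m1+m2" "j < m1+m2" "i \<noteq> j"
    show "b i * b j = 0"
    proof (cases "i < m1")
      case True
      show ?thesis
      proof (cases "j < m1")
        case True thus ?thesis using \<open>i<m1\<close> ij h1(2) by (simp add: b_def)
      next
        case False thus ?thesis using \<open>i<m1\<close> ij cross[of i "j-m1"] by (simp add: b_def)
      qed
    next
      case False
      show ?thesis
      proof (cases "j < m1")
        case True thus ?thesis using \<open>\<not> i<m1\<close> ij cross[of j "i-m1"] by (simp add: b_def mult.commute)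
      next
        case False
        hence "i - m1 \<noteq> j - m1" using \<open>\<not> i<m1\<close> ij by simp
        thus ?thesis using False \<open>\<not> i<m1\<close> ij h2(2) by (simp add: b_def)
      qed
    qed
  qed
  moreover have "(\<Sum>i<m1+m2. b i) = c1 + c2"
    using h1(3) h2(3) by (simp add: sum_split_nat b_def)
  moreover have "\<forall>i<m1+m2. b i * d y (ys i) = 0" using h1(4) h2(4) by (auto simp: b_def ys_def)
  ultimately show ?thesis unfolding ccr_def
    by (intro exI[of _ "m1+m2"] exI[of _ ys] exI[of _ b]) simp
qed

lemma ccr_transfer:
  assumes "S \<subseteq> X" "y \<in> X" "y' \<in> X" "ccr d S y' c" "c * d y y' = 0"
  shows "ccr d S y c"
proof -
  obtain m :: nat and ys b where h: "\<forall>i<m. ys i \<in> S" "\<forall>i<m. \<forall>j<m. i \<noteq> j \<longrightarrow> b i * b j = 0"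
      "(\<Sum>i<m. b i) = c" "\<forall>i<m. b i * d y' (ys i) = 0"
    using assms unfolding ccr_def by blast
  have "\<forall>i<m. b i * d y (ys i) = 0"
  proof (intro allI impI)
    fix i assume i: "i < m"
    have "b i * d y y' = b i * c * d y y'" using disj_le[OF h(2) i] h(3) by simp
    also have "\<dots> = b i * (c * d y y')" by (simp add: mult.assoc)
    finally have "b i * d y y' = 0" using assms by simp
    thus "b i * d y (ys i) = 0" using tri0[of y y' "ys i" "b i"] assms h i by auto
  qed
  thus ?thesis unfolding ccr_def using h by blast
qed

lemma ccr_compose_aux:
  fixes m :: nat
  assumes "S \<subseteq> X" "T \<subseteq> X" "y \<in> X" "\<forall>t\<in>T. ccr d S t 1"
  shows "(\<forall>i<m. ys i \<in> T) \<Longrightarrow> (\<forall>i<m. \<forall>j<m. i \<noteq> j \<longrightarrow> b i * b j = 0)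
      \<Longrightarrow> (\<forall>i<m. b i * d y (ys i) = 0) \<Longrightarrow> ccr d S y (\<Sum>i<m. b i)"
proof (induction m)
  case 0 thus ?case using ccr_zero by simp
next
  case (Suc m)
  have IH: "ccr d S y (\<Sum>i<m. b i)" using Suc by simp
  have "ccr d S (ys m) 1" using Suc.prems assms by simp
  hence "ccr d S (ys m) (1 * b m)" by (rule ccr_restrict)
  hence lm: "ccr d S y (b m)" using ccr_transfer[of S y "ys m" "b m"] Suc.prems assms by auto
  have "(\<Sum>i<m. b i) * b m = (\<Sum>i<m. b i * b m)" by (simp add: sum_distrib_right)
  also have "\<dots> = 0" using Suc.prems(2) by (intro sum.neutral) auto
  finally have "(\<Sum>i<m. b i) * b m = 0" .
  from ccr_add[OF IH lm this] show ?case by simp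
qed

lemma ccr_compose:
  assumes "S \<subseteq> X" "T \<subseteq> X" "y \<in> X" "\<forall>t\<in>T. ccr d S t 1" "ccr d T y c"
  shows "ccr d S y c"
  using assms(5) ccr_compose_aux[OF assms(1-4)] unfolding ccr_def by blast

lemma part1:
  fixes xs :: "nat \<Rightarrow> 'x" and n s :: nat
  assumes sn: "s \<le> n" and xX: "\<forall>i\<in>{1..n}. xs i \<in> X"
    and span: "\<forall>y\<in>X. cc_of d ({z} \<union> xs ` {1..n}) y"
    and orth: "orthogonal_set X d z (xs ` {1..s})"
  shows "\<exists>a. referential X d z ((xs ` {1..s} \<union> (\<lambda>i. bsmul X d z (a i) (xs i)) ` {s+1..n}) - {z})"
proof -
  define a where "a i = (\<Prod>j\<in>{1..<i}. d (xs i) (xs j))" for i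
  define e where "e i = (if i \<le> s then 1 else a i)" for i
  define u where "u i = (if i \<le> s then xs i else bsmul X d z (a i) (xs i))" for i
  have rel_u: "rel (e i) (u i) (xs i)" if "i \<in> {1..n}" for i
    using rel_one rel_smul xX that by (auto simp: e_def u_def)
  have uX: "u i \<in> X" if "i \<in> {1..n}" for i using rel_u[OF that] unfolding rel_def by simp
  have a_le: "a i * (1 + d (xs i) (xs j)) = 0" if "j \<in> {1..<i}" for i j
  proof -
    let ?D = "d (xs i) (xs j)"
    have "a i = ?D * (\<Prod>k\<in>{1..<i}-{j}. d (xs i) (xs k))"
      unfolding a_def using that by (simp add: prod.remove)
    hence "a i * (1 + ?D) = (\<Prod>k\<in>{1..<i}-{j}. d (xs i) (xs k)) * (?D * (1 + ?D))"
      by (simp add: algebra_simps)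
    also have "?D * (1 + ?D) = 0" by (simp add: bs)
    finally show ?thesis by simp
  qed
  have setEq: "xs ` {1..s} \<union> (\<lambda>i. bsmul X d z (a i) (xs i)) ` {s+1..n} = u ` {1..n}"
  proof -
    have "{1..n} = {1..s} \<union> {s+1..n}" using sn by auto
    hence "u ` {1..n} = u ` {1..s} \<union> u ` {s+1..n}" by auto
    moreover have "u ` {1..s} = xs ` {1..s}" by (auto simp: u_def)
    moreover have "u ` {s+1..n} = (\<lambda>i. bsmul X d z (a i) (xs i)) ` {s+1..n}" by (auto simp: u_def)
    ultimately show ?thesis by simp
  qed
  define R where "R = u ` {1..n} - {z}"
  have RX: "R \<subseteq> X" using uX by (auto simp: R_def)
  have orthR: "orthogonal_set X d z R"
    unfolding orthogonal_set_def
  proof (intro conjI ballI impI)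
    show "finite R" by (simp add: R_def)
    show "R \<subseteq> X" by (rule RX)
    show "z \<notin> R" by (simp add: R_def)
  next
    fix x y assume x: "x \<in> R" and y: "y \<in> R" and xy: "x \<noteq> y"
    obtain i where i: "i \<in> {1..n}" "x = u i" using x by (auto simp: R_def)
    obtain k where k: "k \<in> {1..n}" "y = u k" using y by (auto simp: R_def)
    have ik: "i \<noteq> k" using xy i k by auto
    show "borth d z x y"
    proof (cases "i \<le> s \<and> k \<le> s")
      case True
      hence "x \<in> xs ` {1..s}" "y \<in> xs ` {1..s}" using i k by (auto simp: u_def)
      thus ?thesis using orth xy unfolding orthogonal_set_def by blast
    next
      case False
      have gen: "borth d z (u p) (u q)" if "p \<in> {1..n}" "q \<in> {1..n}" "q < p" "\<not> p \<le> s" for p q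
      proof -
        have "e p * e q * (1 + d (xs p) (xs q)) = e q * (a p * (1 + d (xs p) (xs q)))"
          using that by (simp add: e_def algebra_simps)
        also have "\<dots> = 0" using a_le[of q p] that by simp
        finally show ?thesis using orth_rel[OF rel_u[OF that(1)] rel_u[OF that(2)]] by simp
      qed
      show ?thesis
      proof (cases "k < i")
        case True
        hence "\<not> i \<le> s" using False by auto
        thus ?thesis using gen[of i k] i k True by simp
      next
        case False2: False
        hence "i < k" using ik by simp
        hence "\<not> k \<le> s" using False by auto
        hence "borth d z y x" using gen[of k i] i k \<open>i < k\<close> by simp
        thus ?thesis using borth_sym uX i k by auto
      qed
    qed
  qed
  define S where "S = R \<union> {z}"
  have SX: "S \<subseteq> X" using RX zX by (auto simp: S_def)
  have uS: "u i \<in> S" if "i \<in> {1..n}" for i using that by (auto simp: S_def R_def)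
  have xcc: "i \<in> {1..n} \<longrightarrow> ccr d S (xs i) 1" for i
  proof (induction i rule: less_induct)
    case (less i)
    show ?case
    proof
      assume iI: "i \<in> {1..n}"
      have xiX: "xs i \<in> X" using xX iI by simp
      show "ccr d S (xs i) 1"
      proof (cases "i \<le> s")
        case True
        thus ?thesis using ccr_mem[OF uS[OF iI], of 1 "xs i"] dself[OF xiX] by (simp add: u_def)
      next
        case False
        have step: "1 \<le> k \<and> k \<le> i \<longrightarrow> ccr d S (xs i) (1 + (\<Prod>j\<in>{1..<k}. d (xs i) (xs j)))" for k
        proof (induction k)
          case 0 thus ?case by simp
        next
          case (Suc k)
          show ?case
          proof
            assume ks: "1 \<le> Suc k \<and> Suc k \<le> i"
            show "ccr d S (xs i) (1 + (\<Prod>j\<in>{1..<Suc k}. d (xs i) (xs j)))"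
            proof (cases "k = 0")
              case True
              have "(1::'b) + 1 = 0" by (rule two)
              thus ?thesis using True ccr_zero by simp
            next
              case False
              let ?P = "\<Prod>j\<in>{1..<k}. d (xs i) (xs j)"
              let ?Dk = "d (xs i) (xs k)"
              have IH: "ccr d S (xs i) (1 + ?P)" using Suc.IH ks False by simp
              have kI: "k \<in> {1..n}" using ks False iI by auto
              have xkX: "xs k \<in> X" using xX kI by simp
              have "ccr d S (xs k) 1" using less.IH[of k] ks kI by simp
              hence "ccr d S (xs k) (1 * (?P * (1 + ?Dk)))" by (rule ccr_restrict)
              hence c2: "ccr d S (xs i) (1 * (?P * (1 + ?Dk)))"
                by (rule ccr_transfer[OF SX xiX xkX]) (simp add: bs)
              have "(1 + ?P) * (1 * (?P * (1 + ?Dk))) = 0" by (simp add: bs)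
              from ccr_add[OF IH c2 this]
              have c3: "ccr d S (xs i) ((1 + ?P) + 1 * (?P * (1 + ?Dk)))" .
              have "{1..<Suc k} = insert k {1..<k}" using False by auto
              hence eq1: "(\<Prod>j\<in>{1..<Suc k}. d (xs i) (xs j)) = ?Dk * ?P" by simp
              have eq2: "(1 + ?P) + 1 * (?P * (1 + ?Dk)) = 1 + ?Dk * ?P" by (simp add: bs)
              show ?thesis unfolding eq1 by (rule ccr_cong[OF c3 eq2])
            qed
          qed
        qed
        have c1: "ccr d S (xs i) (1 + a i)" using step[of i] iI by (simp add: a_def)
        have "a i * d (u i) (xs i) = 0" using rel_u[OF iI] False unfolding rel_def e_def by simp
        hence "a i * d (xs i) (u i) = 0" using dsym uX[OF iI] xiX by simp
        hence c2: "ccr d S (xs i) (a i)" using ccr_mem[OF uS[OF iI]] by simp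
        have "(1 + a i) * a i = 0" by (simp add: bs)
        from ccr_add[OF c1 c2 this] show ?thesis by (simp add: bs)
      qed
    qed
  qed
  have "\<forall>y\<in>X. cc_of d (R \<union> {z}) y"
  proof
    fix y assume yX: "y \<in> X"
    let ?T = "{z} \<union> xs ` {1..n}"
    have TX: "?T \<subseteq> X" using xX zX by auto
    have Tc: "\<forall>t\<in>?T. ccr d S t 1"
    proof
      fix t assume "t \<in> ?T"
      thus "ccr d S t 1"
      proof
        assume "t \<in> {z}"
        thus ?thesis using ccr_mem[of z S 1 t] dself zX by (simp add: S_def)
      next
        assume "t \<in> xs ` {1..n}"
        thus ?thesis using xcc by auto
      qed
    qed
    have "ccr d ?T y 1" using span yX cc_of_iff by blast
    from ccr_compose[OF SX TX yX Tc this] show "cc_of d (R \<union> {z}) y"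
      using cc_of_iff S_def by simp
  qed
  hence "referential X d z R" using orthR unfolding referential_def by simp
  hence "referential X d z ((xs ` {1..s} \<union> (\<lambda>i. bsmul X d z (a i) (xs i)) ` {s+1..n}) - {z})"
    using setEq R_def by simp
  thus ?thesis by (rule exI[of _ a])
qed

lemma cc_of_mono: "S \<subseteq> S' \<Longrightarrow> cc_of d S y \<Longrightarrow> cc_of d S' y"
  unfolding cc_of_def by blast

lemma part2:
  assumes cfg: "cfg_space X d" and oR: "orthogonal_set X d z R"
  shows "\<exists>R'. R \<subseteq> R' \<and> referential X d z R'"
proof -
  obtain F where F: "finite F" "F \<subseteq> X" "\<forall>y\<in>X. cc_of d F y"
    using cfg unfolding cfg_space_def by blast
  have fR: "finite R" "R \<subseteq> X" "z \<notin> R" using oR unfolding orthogonal_set_def by auto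
  obtain l where l: "set l = R" using finite_list fR(1) by blast
  obtain f where f: "set f = F" using finite_list F(1) by blast
  define s where "s = length l"
  define n where "n = length l + length f"
  define xs where "xs i = (if i \<le> s then l!(i-1) else f!(i-s-1))" for i :: nat
  have im1: "xs ` {1..s} = R"
  proof
    show "xs ` {1..s} \<subseteq> R"
    proof
      fix x assume "x \<in> xs ` {1..s}"
      then obtain i where i: "i \<in> {1..s}" "x = xs i" by blast
      hence "x = l!(i-1)" "i - 1 < length l" by (auto simp: xs_def s_def)
      thus "x \<in> R" using l nth_mem by blast
    qed
    show "R \<subseteq> xs ` {1..s}"
    proof
      fix r assume "r \<in> R"
      then obtain j where j: "j < length l" "r = l!j" using l by (auto simp: in_set_conv_nth)
      hence "xs (Suc j) = r" "Suc j \<in> {1..s}" by (auto simp: xs_def s_def)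
      thus "r \<in> xs ` {1..s}" by (metis imageI)
    qed
  qed
  have im2: "xs ` {s+1..n} = F"
  proof
    show "xs ` {s+1..n} \<subseteq> F"
    proof
      fix x assume "x \<in> xs ` {s+1..n}"
      then obtain i where i: "i \<in> {s+1..n}" "x = xs i" by blast
      hence "x = f!(i-s-1)" "i-s-1 < length f" by (auto simp: xs_def s_def n_def)
      thus "x \<in> F" using f nth_mem by blast
    qed
    show "F \<subseteq> xs ` {s+1..n}"
    proof
      fix r assume "r \<in> F"
      then obtain j where j: "j < length f" "r = f!j" using f by (auto simp: in_set_conv_nth)
      hence "xs (s+1+j) = r" "s+1+j \<in> {s+1..n}" by (auto simp: xs_def s_def n_def)
      thus "r \<in> xs ` {s+1..n}" by (metis imageI)
    qed
  qed
  have sn: "s \<le> n" by (simp add: s_def n_def)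
  have "{1..n} = {1..s} \<union> {s+1..n}" using sn by auto
  hence all: "xs ` {1..n} = R \<union> F" using im1 im2 by (simp add: image_Un)
  have h2: "\<forall>i\<in>{1..n}. xs i \<in> X" using all fR F by blast
  have h3: "\<forall>y\<in>X. cc_of d ({z} \<union> xs ` {1..n}) y"
    using F(3) cc_of_mono[of F "{z} \<union> xs ` {1..n}"] all by blast
  have h4: "orthogonal_set X d z (xs ` {1..s})" using oR im1 by simp
  obtain a where "referential X d z ((xs ` {1..s} \<union> (\<lambda>i. bsmul X d z (a i) (xs i)) ` {s+1..n}) - {z})"
    using part1[OF sn h2 h3 h4] by blast
  moreover have "R \<subseteq> (xs ` {1..s} \<union> (\<lambda>i. bsmul X d z (a i) (xs i)) ` {s+1..n}) - {z}"
    using im1 fR(3) by blast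
  ultimately show ?thesis by blast
qed

end

theorem mainTheorem12:
  fixes X :: "'x set" and d :: "'x \<Rightarrow> 'x \<Rightarrow> 'b::comm_ring_1" and z :: 'x
  assumes "boolean_ring TYPE('b)"
    and "bmetric X d"
    and "bconvex X d"
    and "z \<in> X"
  shows "(\<forall>n s (xs :: nat \<Rightarrow> 'x).
            s \<le> n \<and> (\<forall>i\<in>{1..n}. xs i \<in> X) \<and>
            (\<forall>y\<in>X. cc_of d ({z} \<union> xs ` {1..n}) y) \<and>
            orthogonal_set X d z (xs ` {1..s})
          \<longrightarrow> (\<exists>a :: nat \<Rightarrow> 'b.
                 referential X d z
                   ((xs ` {1..s} \<union> (\<lambda>i. bsmul X d z (a i) (xs i)) ` {s+1..n}) - {z})))
       \<and> (cfg_space X d \<longrightarrow>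
            (\<forall>R. orthogonal_set X d z R \<longrightarrow> (\<exists>R'. R \<subseteq> R' \<and> referential X d z R')))"
proof -
  interpret BMS X d z
    using assms unfolding boolean_ring_def by unfold_locales auto
  show ?thesis using part1 part2 by blast
qed

end
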